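(* Let $\Gamma$ be a compact topological group, $A$ a locally compact space, and $\mathcal I$ a weakly locally maximal $(\Gamma,A)$-groupoid. Then: (i) there exists a split $\Gamma$-space $(Y_{\mathcal I},\varpi,\phi)$ over $A$ with isotropy groupoid $\mathcal I$, and $Y_{\mathcal I}$ is locally compact; (ii) if $(X,\pi,\varphi)$ and $(X',\pi',\varphi')$ are two split $\Gamma$-spaces over $A$ with isotropy groupoid $\mathcal I$ and $X$, $X'$ are locally compact, then there is a unique $\Gamma$-equivariant homeomorphism $F\colon X\to X'$ with $\varphi'=F\circ\varphi$.
   Context: A space is locally compact if it is Hausdorff and every point has a compact neighbourhood. A split $\Gamma$-space over $A$ is a triple $(X,\pi,\varphi)$ where $X$ carries a continuous left $\Gamma$-action, $\pi\colon X\to A$ is a continuous surjection each of whose fibres is a single $\Gamma$-orbit, and $\varphi\colon A\to X$ is a continuous section of $\pi$. A $(\Gamma,A)$-groupoid is a subspace $\mathcal I\subset\Gamma\times A$ such that for every $a\in A$, $\mathcal I_a:=\mathcal I\cap(\Gamma\times\{a\})=\tilde{\mathcal I}_a\times\{a\}$ with $\tilde{\mathcal I}_a$ a closed subgroup of $\Gamma$. It is weakly locally maximal if every $a\in A$ has a neighbourhood $U$ such that $\tilde{\mathcal I}_u\subset\tilde{\mathcal I}_a$ for all $u\in U$. The isotropy groupoid of $(X,\pi,\varphi)$ is $\{(\gamma,a)\in\Gamma\times A:\gamma\in\Gamma_{\varphi(a)}\}$, where $\Gamma_x$ is the stabiliser of $x$. *)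

theory Defs
  imports "HOL-Analysis.Analysis" "HOL-Algebra.Group"
begin

definition loc_compact :: "'a topology \<Rightarrow> bool" where
  "loc_compact X \<longleftrightarrow> Hausdorff_space X \<and> locally_compact_space X"

definition topological_group :: "('g, 'b) monoid_scheme \<Rightarrow> 'g topology \<Rightarrow> bool" where
  "topological_group G T \<longleftrightarrow> group G \<and> topspace T = carrier G \<and>
     continuous_map (prod_topology T T) T (\<lambda>(g, h). g \<otimes>\<^bsub>G\<^esub> h) \<and>
     continuous_map T T (\<lambda>g. inv\<^bsub>G\<^esub> g)"

definition cont_action ::
  "('g, 'b) monoid_scheme \<Rightarrow> 'g topology \<Rightarrow> 'x topology \<Rightarrow> ('g \<Rightarrow> 'x \<Rightarrow> 'x) \<Rightarrow> bool" where
  "cont_action G T X act \<longleftrightarrow>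
     (\<forall>g\<in>carrier G. \<forall>x\<in>topspace X. act g x \<in> topspace X) \<and>
     (\<forall>x\<in>topspace X. act \<one>\<^bsub>G\<^esub> x = x) \<and>
     (\<forall>g\<in>carrier G. \<forall>h\<in>carrier G. \<forall>x\<in>topspace X.
        act (g \<otimes>\<^bsub>G\<^esub> h) x = act g (act h x)) \<and>
     continuous_map (prod_topology T X) X (\<lambda>(g, x). act g x)"

definition orbit :: "('g, 'b) monoid_scheme \<Rightarrow> ('g \<Rightarrow> 'x \<Rightarrow> 'x) \<Rightarrow> 'x \<Rightarrow> 'x set" where
  "orbit G act x = (\<lambda>g. act g x) ` carrier G"

definition stabiliser :: "('g, 'b) monoid_scheme \<Rightarrow> ('g \<Rightarrow> 'x \<Rightarrow> 'x) \<Rightarrow> 'x \<Rightarrow> 'g set" where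
  "stabiliser G act x = {g \<in> carrier G. act g x = x}"

definition split_space ::
  "('g, 'b) monoid_scheme \<Rightarrow> 'g topology \<Rightarrow> 'x topology \<Rightarrow> ('g \<Rightarrow> 'x \<Rightarrow> 'x) \<Rightarrow>
   'a topology \<Rightarrow> ('x \<Rightarrow> 'a) \<Rightarrow> ('a \<Rightarrow> 'x) \<Rightarrow> bool" where
  "split_space G T X act A \<pi> \<phi> \<longleftrightarrow>
     cont_action G T X act \<and>
     continuous_map X A \<pi> \<and> \<pi> ` topspace X = topspace A \<and>
     (\<forall>a\<in>topspace A. \<exists>x\<in>topspace X. {y \<in> topspace X. \<pi> y = a} = orbit G act x) \<and>
     continuous_map A X \<phi> \<and> (\<forall>a\<in>topspace A. \<pi> (\<phi> a) = a)"

definition gfib :: "('g \<times> 'a) set \<Rightarrow> 'a \<Rightarrow> 'g set" where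
  "gfib I a = {g. (g, a) \<in> I}"

definition GA_groupoid ::
  "('g, 'b) monoid_scheme \<Rightarrow> 'g topology \<Rightarrow> 'a topology \<Rightarrow> ('g \<times> 'a) set \<Rightarrow> bool" where
  "GA_groupoid G T A I \<longleftrightarrow> I \<subseteq> carrier G \<times> topspace A \<and>
     (\<forall>a\<in>topspace A. subgroup (gfib I a) G \<and> closedin T (gfib I a))"

definition weakly_locally_maximal :: "'a topology \<Rightarrow> ('g \<times> 'a) set \<Rightarrow> bool" where
  "weakly_locally_maximal A I \<longleftrightarrow>
     (\<forall>a\<in>topspace A. \<exists>U. openin A U \<and> a \<in> U \<and> (\<forall>u\<in>U. gfib I u \<subseteq> gfib I a))"

definition isotropy_groupoid ::
  "('g, 'b) monoid_scheme \<Rightarrow> ('g \<Rightarrow> 'x \<Rightarrow> 'x) \<Rightarrow> 'a topology \<Rightarrow> ('a \<Rightarrow> 'x) \<Rightarrow> ('g \<times> 'a) set" where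
  "isotropy_groupoid G act A \<phi> = {(g, a). a \<in> topspace A \<and> g \<in> stabiliser G act (\<phi> a)}"

definition equivariant_homeo ::
  "('g, 'b) monoid_scheme \<Rightarrow> 'x topology \<Rightarrow> ('g \<Rightarrow> 'x \<Rightarrow> 'x) \<Rightarrow>
   'y topology \<Rightarrow> ('g \<Rightarrow> 'y \<Rightarrow> 'y) \<Rightarrow> ('x \<Rightarrow> 'y) \<Rightarrow> bool" where
  "equivariant_homeo G X act Y act' F \<longleftrightarrow> homeomorphic_map X Y F \<and>
     (\<forall>g\<in>carrier G. \<forall>x\<in>topspace X. F (act g x) = act' g (F x))"

end

theory Submission
  imports Defs
begin


definition qtop :: "'z topology \<Rightarrow> ('z \<Rightarrow> 'y) \<Rightarrow> 'y topology" where
  "qtop Z q = topology (\<lambda>U. U \<subseteq> q ` topspace Z \<and> openin Z {z \<in> topspace Z. q z \<in> U})"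

lemma istopology_qtop: "istopology (\<lambda>U. U \<subseteq> q ` topspace Z \<and> openin Z {z \<in> topspace Z. q z \<in> U})"
proof -
  have i: "S \<inter> T \<subseteq> q ` topspace Z \<and> openin Z {z \<in> topspace Z. q z \<in> S \<inter> T}"
    if "S \<subseteq> q ` topspace Z \<and> openin Z {z \<in> topspace Z. q z \<in> S}"
      "T \<subseteq> q ` topspace Z \<and> openin Z {z \<in> topspace Z. q z \<in> T}" for S T
  proof -
    have "{z \<in> topspace Z. q z \<in> S \<inter> T} = {z \<in> topspace Z. q z \<in> S} \<inter> {z \<in> topspace Z. q z \<in> T}" by auto
    then show ?thesis using that openin_Int by (metis (no_types, lifting) le_infI1)
  qed
  have u: "\<Union>K \<subseteq> q ` topspace Z \<and> openin Z {z \<in> topspace Z. q z \<in> \<Union>K}"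
    if K: "\<forall>U\<in>K. U \<subseteq> q ` topspace Z \<and> openin Z {z \<in> topspace Z. q z \<in> U}" for K
  proof -
    have "{z \<in> topspace Z. q z \<in> \<Union>K} = \<Union>((\<lambda>U. {z \<in> topspace Z. q z \<in> U}) ` K)" by auto
    then show ?thesis using K by auto
  qed
  show ?thesis unfolding istopology_def using i u by blast
qed

lemma openin_qtop: "openin (qtop Z q) U \<longleftrightarrow> U \<subseteq> q ` topspace Z \<and> openin Z {z \<in> topspace Z. q z \<in> U}"
  unfolding qtop_def topology_inverse'[OF istopology_qtop] by simp

lemma topspace_qtop: "topspace (qtop Z q) = q ` topspace Z"
proof -
  have "openin (qtop Z q) (q ` topspace Z)"
    unfolding openin_qtop by (auto intro: openin_subopen[THEN iffD2] simp: )
  then have "q ` topspace Z \<subseteq> topspace (qtop Z q)" by (rule openin_subset)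
  moreover have "topspace (qtop Z q) \<subseteq> q ` topspace Z"
    unfolding topspace_def[of "qtop Z q"] by (auto simp: openin_qtop)
  ultimately show ?thesis by blast
qed

lemma quotient_map_qtop: "quotient_map Z (qtop Z q) q"
  unfolding quotient_map_def by (auto simp: openin_qtop topspace_qtop)

lemma Hausdorff_proper_image:
  assumes q: "quotient_map Z Y q" and cm: "closed_map Z Y q" and H: "Hausdorff_space Z"
    and fib: "\<And>y. y \<in> topspace Y \<Longrightarrow> compactin Z {z \<in> topspace Z. q z = y}"
  shows "Hausdorff_space Y"
  unfolding Hausdorff_space_def
proof (intro allI impI)
  fix y1 y2 assume "y1 \<in> topspace Y \<and> y2 \<in> topspace Y \<and> y1 \<noteq> y2"
  then have y: "y1 \<in> topspace Y" "y2 \<in> topspace Y" "y1 \<noteq> y2" by auto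
  have "disjnt {z \<in> topspace Z. q z = y1} {z \<in> topspace Z. q z = y2}"
    using y by (auto simp: disjnt_def)
  then obtain U1 U2 where U: "openin Z U1" "openin Z U2" "{z \<in> topspace Z. q z = y1} \<subseteq> U1"
    "{z \<in> topspace Z. q z = y2} \<subseteq> U2" "disjnt U1 U2"
    using Hausdorff_space_compact_separation[OF H fib[OF y(1)] fib[OF y(2)]] by blast
  define V1 where "V1 = topspace Y - q ` (topspace Z - U1)"
  define V2 where "V2 = topspace Y - q ` (topspace Z - U2)"
  have "closedin Y (q ` (topspace Z - U1))" "closedin Y (q ` (topspace Z - U2))"
    using cm U unfolding closed_map_def by auto
  then have "openin Y V1" "openin Y V2" unfolding V1_def V2_def by auto
  moreover have "y1 \<in> V1" "y2 \<in> V2" using y U unfolding V1_def V2_def by auto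
  moreover have "disjnt V1 V2"
  proof -
    have "y \<notin> V1 \<or> y \<notin> V2" for y
    proof (cases "y \<in> topspace Y")
      case True
      then obtain z where "z \<in> topspace Z" "q z = y"
        using quotient_imp_surjective_map[OF q] by (metis imageE)
      then show ?thesis using U(5) unfolding V1_def V2_def disjnt_def by blast
    qed (auto simp: V1_def)
    then show ?thesis by (auto simp: disjnt_def)
  qed
  ultimately show "\<exists>U V. openin Y U \<and> openin Y V \<and> y1 \<in> U \<and> y2 \<in> V \<and> disjnt U V" by blast
qed

lemma quotient_lift:
  assumes p: "quotient_map Z X p" and p': "continuous_map Z X' p'"
    and eq: "\<forall>z \<in> topspace Z. \<forall>w \<in> topspace Z. p z = p w \<longrightarrow> p' z = p' w"
  shows "continuous_map X X' (\<lambda>x. p' (SOME z. z \<in> topspace Z \<and> p z = x))"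
    and "\<And>z. z \<in> topspace Z \<Longrightarrow> p' (SOME w. w \<in> topspace Z \<and> p w = p z) = p' z"
proof -
  show F2: "p' (SOME w. w \<in> topspace Z \<and> p w = p z) = p' z" if z: "z \<in> topspace Z" for z
  proof -
    have "\<exists>w. w \<in> topspace Z \<and> p w = p z" using z by blast
    then have "(SOME w. w \<in> topspace Z \<and> p w = p z) \<in> topspace Z \<and> p (SOME w. w \<in> topspace Z \<and> p w = p z) = p z"
      by (rule someI_ex)
    then show ?thesis using eq z by blast
  qed
  have "continuous_map Z X' ((\<lambda>x. p' (SOME z. z \<in> topspace Z \<and> p z = x)) \<circ> p)"
    using p' by (rule continuous_map_eq) (simp add: F2)
  then show "continuous_map X X' (\<lambda>x. p' (SOME z. z \<in> topspace Z \<and> p z = x))"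
    by (rule continuous_compose_quotient_map[OF p])
qed

lemma quotient_iso:
  assumes p: "quotient_map Z X p" and p': "quotient_map Z X' p'"
    and eq: "\<And>z w. z \<in> topspace Z \<Longrightarrow> w \<in> topspace Z \<Longrightarrow> p z = p w \<longleftrightarrow> p' z = p' w"
  shows "\<exists>F. homeomorphic_map X X' F \<and> (\<forall>z \<in> topspace Z. F (p z) = p' z)"
proof -
  define F where "F = (\<lambda>x. p' (SOME z. z \<in> topspace Z \<and> p z = x))"
  define F' where "F' = (\<lambda>x. p (SOME z. z \<in> topspace Z \<and> p' z = x))"
  have h1: "\<forall>x \<in> topspace Z. \<forall>y \<in> topspace Z. p x = p y \<longrightarrow> p' x = p' y"
    and h2: "\<forall>x \<in> topspace Z. \<forall>y \<in> topspace Z. p' x = p' y \<longrightarrow> p x = p y"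
    using eq by blast+
  note L1 = quotient_lift[OF p quotient_imp_continuous_map[OF p'] h1, folded F_def]
  note L2 = quotient_lift[OF p' quotient_imp_continuous_map[OF p] h2, folded F'_def]
  have F2: "F (p z) = p' z" if "z \<in> topspace Z" for z using L1(2)[OF that] by (simp add: F_def)
  have F'2: "F' (p' z) = p z" if "z \<in> topspace Z" for z using L2(2)[OF that] by (simp add: F'_def)
  have "homeomorphic_maps X X' F F'"
    unfolding homeomorphic_maps_def
  proof (intro conjI ballI L1(1) L2(1))
    fix x assume "x \<in> topspace X"
    then obtain z where z: "z \<in> topspace Z" "x = p z"
      using quotient_imp_surjective_map[OF p] by (metis imageE)
    show "F' (F x) = x" unfolding z(2) F2[OF z(1)] F'2[OF z(1)] ..
  next
    fix x assume "x \<in> topspace X'"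
    then obtain z where z: "z \<in> topspace Z" "x = p' z"
      using quotient_imp_surjective_map[OF p'] by (metis imageE)
    show "F (F' x) = x" unfolding z(2) F2[OF z(1)] F'2[OF z(1)] ..
  qed
  then have "homeomorphic_map X X' F" unfolding homeomorphic_map_maps by blast
  then show ?thesis using F2 by blast
qed



locale splitsp =
  fixes G :: "('g, 'b) monoid_scheme" and T :: "'g topology" and X :: "'x topology"
    and act :: "'g \<Rightarrow> 'x \<Rightarrow> 'x" and A :: "'a topology" and \<pi> :: "'x \<Rightarrow> 'a" and \<phi> :: "'a \<Rightarrow> 'x"
  assumes tg: "topological_group G T" and ss: "split_space G T X act A \<pi> \<phi>"
begin

sublocale group G using tg by (simp add: topological_group_def)

lemma carrier_eq: "topspace T = carrier G" using tg by (simp add: topological_group_def)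

lemma ca: "cont_action G T X act" using ss by (simp add: split_space_def)

lemma act_closed: "g \<in> carrier G \<Longrightarrow> x \<in> topspace X \<Longrightarrow> act g x \<in> topspace X"
  using ca by (simp add: cont_action_def)

lemma act_one: "x \<in> topspace X \<Longrightarrow> act \<one>\<^bsub>G\<^esub> x = x"
  using ca by (simp add: cont_action_def)

lemma act_mult: "g \<in> carrier G \<Longrightarrow> h \<in> carrier G \<Longrightarrow> x \<in> topspace X \<Longrightarrow>
    act (g \<otimes>\<^bsub>G\<^esub> h) x = act g (act h x)"
  using ca by (simp add: cont_action_def)

lemma act_cont: "continuous_map (prod_topology T X) X (\<lambda>(g, x). act g x)"
  using ca by (simp add: cont_action_def)

lemma pi_cont: "continuous_map X A \<pi>" using ss by (simp add: split_space_def)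
lemma phi_cont: "continuous_map A X \<phi>" using ss by (simp add: split_space_def)

lemma pi_top: "x \<in> topspace X \<Longrightarrow> \<pi> x \<in> topspace A"
  using continuous_map_image_subset_topspace[OF pi_cont] by blast

lemma phi_top: "a \<in> topspace A \<Longrightarrow> \<phi> a \<in> topspace X"
  using continuous_map_image_subset_topspace[OF phi_cont] by blast

lemma pi_phi: "a \<in> topspace A \<Longrightarrow> \<pi> (\<phi> a) = a"
  using ss by (simp add: split_space_def)

lemma fibre: "a \<in> topspace A \<Longrightarrow> \<exists>x\<in>topspace X. {y \<in> topspace X. \<pi> y = a} = orbit G act x"
  using ss by (simp add: split_space_def)

lemma pi_act:
  assumes g: "g \<in> carrier G" and x: "x \<in> topspace X"
  shows "\<pi> (act g x) = \<pi> x"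
proof -
  obtain x0 where x0: "x0 \<in> topspace X" "{y \<in> topspace X. \<pi> y = \<pi> x} = orbit G act x0"
    using fibre[OF pi_top[OF x]] by blast
  have "x \<in> orbit G act x0" using x0(2) x by blast
  then obtain h where h: "h \<in> carrier G" "x = act h x0" by (auto simp: orbit_def)
  have "act g x = act (g \<otimes>\<^bsub>G\<^esub> h) x0" using h g x0 by (simp add: act_mult)
  then have "act g x \<in> orbit G act x0" using g h by (auto simp: orbit_def)
  then show ?thesis using x0(2) by blast
qed

lemma act_inv_cancel: "g \<in> carrier G \<Longrightarrow> x \<in> topspace X \<Longrightarrow> act (inv\<^bsub>G\<^esub> g) (act g x) = x"
  by (metis act_mult act_one inv_closed l_inv)

lemma surj:
  assumes x: "x \<in> topspace X"
  shows "\<exists>g\<in>carrier G. x = act g (\<phi> (\<pi> x))"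
proof -
  define a where "a = \<pi> x"
  have a: "a \<in> topspace A" using x pi_top a_def by blast
  obtain x0 where x0: "x0 \<in> topspace X" "{y \<in> topspace X. \<pi> y = a} = orbit G act x0"
    using fibre[OF a] by blast
  have "x \<in> orbit G act x0" using x0(2) x a_def by blast
  then obtain k where k: "k \<in> carrier G" "x = act k x0" by (auto simp: orbit_def)
  have "\<phi> a \<in> orbit G act x0" using x0(2) phi_top[OF a] pi_phi[OF a] by blast
  then obtain h where h: "h \<in> carrier G" "\<phi> a = act h x0" by (auto simp: orbit_def)
  have "act (k \<otimes>\<^bsub>G\<^esub> inv\<^bsub>G\<^esub> h) (\<phi> a) = act (k \<otimes>\<^bsub>G\<^esub> inv\<^bsub>G\<^esub> h \<otimes>\<^bsub>G\<^esub> h) x0"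
    using h k x0 by (simp add: act_mult)
  also have "k \<otimes>\<^bsub>G\<^esub> inv\<^bsub>G\<^esub> h \<otimes>\<^bsub>G\<^esub> h = k" using h k by (simp add: m_assoc)
  finally show ?thesis using k h by (metis a_def inv_closed m_closed)
qed

lemma p_eq:
  assumes g: "g \<in> carrier G" and h: "h \<in> carrier G" and a: "a \<in> topspace A" and b: "b \<in> topspace A"
  shows "act g (\<phi> a) = act h (\<phi> b) \<longleftrightarrow> a = b \<and> inv\<^bsub>G\<^esub> g \<otimes>\<^bsub>G\<^esub> h \<in> stabiliser G act (\<phi> a)"
proof
  assume e: "act g (\<phi> a) = act h (\<phi> b)"
  have "a = b" using e pi_act[OF g phi_top[OF a]] pi_act[OF h phi_top[OF b]] pi_phi a b by metis
  moreover have "act (inv\<^bsub>G\<^esub> g \<otimes>\<^bsub>G\<^esub> h) (\<phi> a) = \<phi> a"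
  proof -
    have "act (inv\<^bsub>G\<^esub> g \<otimes>\<^bsub>G\<^esub> h) (\<phi> a) = act (inv\<^bsub>G\<^esub> g) (act h (\<phi> a))"
      using g h a by (simp add: act_mult phi_top)
    also have "\<dots> = act (inv\<^bsub>G\<^esub> g) (act g (\<phi> a))" using e \<open>a = b\<close> by simp
    also have "\<dots> = \<phi> a" using g a by (simp add: act_inv_cancel phi_top)
    finally show ?thesis .
  qed
  ultimately show "a = b \<and> inv\<^bsub>G\<^esub> g \<otimes>\<^bsub>G\<^esub> h \<in> stabiliser G act (\<phi> a)"
    using g h by (simp add: stabiliser_def)
next
  assume "a = b \<and> inv\<^bsub>G\<^esub> g \<otimes>\<^bsub>G\<^esub> h \<in> stabiliser G act (\<phi> a)"
  then have ab: "a = b" and st: "act (inv\<^bsub>G\<^esub> g \<otimes>\<^bsub>G\<^esub> h) (\<phi> a) = \<phi> a"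
    by (auto simp: stabiliser_def)
  have "act h (\<phi> a) = act (g \<otimes>\<^bsub>G\<^esub> (inv\<^bsub>G\<^esub> g \<otimes>\<^bsub>G\<^esub> h)) (\<phi> a)"
    using g h by (simp add: m_assoc[symmetric])
  also have "\<dots> = act g (act (inv\<^bsub>G\<^esub> g \<otimes>\<^bsub>G\<^esub> h) (\<phi> a))"
    using g h a by (simp add: act_mult phi_top)
  also have "\<dots> = act g (\<phi> a)" using st by simp
  finally show "act g (\<phi> a) = act h (\<phi> b)" using ab by simp
qed

lemma p_cont: "continuous_map (prod_topology T A) X (\<lambda>(g, a). act g (\<phi> a))"
proof -
  have "continuous_map (prod_topology T A) (prod_topology T X) (\<lambda>z. (fst z, \<phi> (snd z)))"
    by (intro continuous_map_pairedI continuous_map_fst continuous_map_compose[OF continuous_map_snd phi_cont, unfolded o_def])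
  from continuous_map_compose[OF this act_cont] show ?thesis
    by (simp add: o_def case_prod_beta')
qed

lemma p_surj: "(\<lambda>(g, a). act g (\<phi> a)) ` (topspace (prod_topology T A)) = topspace X"
proof
  show "(\<lambda>(g, a). act g (\<phi> a)) ` topspace (prod_topology T A) \<subseteq> topspace X"
    using act_closed phi_top carrier_eq by auto
  show "topspace X \<subseteq> (\<lambda>(g, a). act g (\<phi> a)) ` topspace (prod_topology T A)"
  proof
    fix x assume x: "x \<in> topspace X"
    then obtain g where "g \<in> carrier G" "x = act g (\<phi> (\<pi> x))" using surj by blast
    then show "x \<in> (\<lambda>(g, a). act g (\<phi> a)) ` topspace (prod_topology T A)"
      using pi_top[OF x] carrier_eq by (auto intro!: image_eqI[of _ _ "(g, \<pi> x)"])
  qed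
qed

lemma p_quot:
  assumes cT: "compact_space T" and lX: "loc_compact X"
  shows "quotient_map (prod_topology T A) X (\<lambda>(g, a). act g (\<phi> a))"
proof -
  let ?p = "\<lambda>(g, a). act g (\<phi> a)"
  have HX: "Hausdorff_space X" and LX: "locally_compact_space X" using lX by (auto simp: loc_compact_def)
  have "proper_map (prod_topology T A) X ?p"
  proof (rule compact_imp_proper_map)
    show "k_space X" using LX by (rule locally_compact_imp_k_space)
    show "kc_space X" using HX by (rule Hausdorff_imp_kc_space)
    show "?p \<in> topspace (prod_topology T A) \<rightarrow> topspace X" using p_surj by blast
    show "continuous_map (prod_topology T A) X ?p \<or> kc_space (prod_topology T A)" using p_cont by blast
    fix K assume K: "compactin X K"
    let ?S = "{z \<in> topspace (prod_topology T A). ?p z \<in> K}"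
    have cl: "closedin (prod_topology T A) ?S"
      by (rule closedin_continuous_map_preimage[OF p_cont compactin_imp_closedin[OF HX K]])
    have sub: "?S \<subseteq> topspace T \<times> \<pi> ` K"
    proof
      fix z assume z: "z \<in> ?S"
      then obtain g a where ga: "z = (g, a)" "g \<in> topspace T" "a \<in> topspace A" "act g (\<phi> a) \<in> K"
        by auto
      have "\<pi> (act g (\<phi> a)) = a" using ga carrier_eq by (simp add: pi_act phi_top pi_phi)
      then show "z \<in> topspace T \<times> \<pi> ` K" using ga by force
    qed
    have "compactin (prod_topology T A) (topspace T \<times> \<pi> ` K)"
      using cT image_compactin[OF K pi_cont] by (simp add: compactin_Times compact_space_def)
    then show "compactin (prod_topology T A) ?S" using closed_compactin sub cl by blast
  qed
  then show ?thesis
    by (intro continuous_closed_imp_quotient_map p_cont p_surj proper_imp_closed_map)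
qed

end



definition lc :: "('g, 'b) monoid_scheme \<Rightarrow> 'g \<Rightarrow> 'g set \<Rightarrow> 'g set" where
  "lc G g S = (\<lambda>k. g \<otimes>\<^bsub>G\<^esub> k) ` S"

definition qmap :: "('g, 'b) monoid_scheme \<Rightarrow> ('g \<times> 'a) set \<Rightarrow> 'g \<times> 'a \<Rightarrow> 'g set \<times> 'a" where
  "qmap G I z = (lc G (fst z) (gfib I (snd z)), snd z)"

definition actY :: "('g, 'b) monoid_scheme \<Rightarrow> 'g \<Rightarrow> 'g set \<times> 'a \<Rightarrow> 'g set \<times> 'a" where
  "actY G g y = (lc G g (fst y), snd y)"

locale constr =
  fixes G :: "('g, 'b) monoid_scheme" and T :: "'g topology" and A :: "'a topology"
    and I :: "('g \<times> 'a) set"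
  assumes tg: "topological_group G T" and cT: "compact_space T" and hT: "Hausdorff_space T"
    and lA: "loc_compact A" and gg: "GA_groupoid G T A I" and wlm: "weakly_locally_maximal A I"
begin

sublocale group G using tg by (simp add: topological_group_def)

lemma carrier_eq: "topspace T = carrier G" using tg by (simp add: topological_group_def)

lemma mult_cont0: "continuous_map (prod_topology T T) T (\<lambda>(g, h). g \<otimes>\<^bsub>G\<^esub> h)"
  using tg by (simp add: topological_group_def)

lemma inv_cont0: "continuous_map T T (\<lambda>g. inv\<^bsub>G\<^esub> g)"
  using tg by (simp add: topological_group_def)

lemma mult_cont: "continuous_map W T f \<Longrightarrow> continuous_map W T g \<Longrightarrow> continuous_map W T (\<lambda>x. f x \<otimes>\<^bsub>G\<^esub> g x)"
  using continuous_map_compose[OF continuous_map_pairedI mult_cont0] by (simp add: o_def)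

lemma inv_cont: "continuous_map W T f \<Longrightarrow> continuous_map W T (\<lambda>x. inv\<^bsub>G\<^esub> f x)"
  using continuous_map_compose[OF _ inv_cont0] by (simp add: o_def)

lemma Isub: "I \<subseteq> carrier G \<times> topspace A" using gg by (simp add: GA_groupoid_def)

lemma subH: "a \<in> topspace A \<Longrightarrow> subgroup (gfib I a) G" using gg by (simp add: GA_groupoid_def)

lemma closedH: "a \<in> topspace A \<Longrightarrow> closedin T (gfib I a)" using gg by (simp add: GA_groupoid_def)

lemma H_sub: "a \<in> topspace A \<Longrightarrow> gfib I a \<subseteq> carrier G"
  using subH subgroup.subset by blast

lemma lc_mult: "g \<in> carrier G \<Longrightarrow> h \<in> carrier G \<Longrightarrow> S \<subseteq> carrier G \<Longrightarrow>
    lc G g (lc G h S) = lc G (g \<otimes>\<^bsub>G\<^esub> h) S"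
  unfolding lc_def image_image by (intro image_cong refl) (auto simp: m_assoc subsetD)

lemma lc_one: "S \<subseteq> carrier G \<Longrightarrow> lc G \<one>\<^bsub>G\<^esub> S = S"
  unfolding lc_def by (auto simp: subsetD)

lemma lc_sub: "g \<in> carrier G \<Longrightarrow> S \<subseteq> carrier G \<Longrightarrow> lc G g S \<subseteq> carrier G"
  unfolding lc_def by auto

lemma lc_H_eq:
  assumes a: "a \<in> topspace A" and k: "k \<in> carrier G"
  shows "lc G k (gfib I a) = gfib I a \<longleftrightarrow> k \<in> gfib I a"
proof
  interpret H: subgroup "gfib I a" G by (rule subH[OF a])
  assume "lc G k (gfib I a) = gfib I a"
  moreover have "k \<in> lc G k (gfib I a)" unfolding lc_def using k
    by (auto intro!: image_eqI[of _ _ "\<one>\<^bsub>G\<^esub>"])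
  ultimately show "k \<in> gfib I a" by simp
next
  interpret H: subgroup "gfib I a" G by (rule subH[OF a])
  assume kH: "k \<in> gfib I a"
  show "lc G k (gfib I a) = gfib I a"
  proof
    show "lc G k (gfib I a) \<subseteq> gfib I a" unfolding lc_def using kH by auto
    show "gfib I a \<subseteq> lc G k (gfib I a)"
    proof
      fix h assume h: "h \<in> gfib I a"
      have "h = k \<otimes>\<^bsub>G\<^esub> (inv\<^bsub>G\<^esub> k \<otimes>\<^bsub>G\<^esub> h)"
        using h k H.subset by (simp add: m_assoc[symmetric] subsetD)
      moreover have "inv\<^bsub>G\<^esub> k \<otimes>\<^bsub>G\<^esub> h \<in> gfib I a" using h kH by simp
      ultimately show "h \<in> lc G k (gfib I a)" unfolding lc_def by blast
    qed
  qed
qed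

lemma mem_lc:
  assumes a: "a \<in> topspace A" and g: "g \<in> carrier G" and h: "h \<in> carrier G"
  shows "h \<in> lc G g (gfib I a) \<longleftrightarrow> lc G h (gfib I a) = lc G g (gfib I a)"
proof
  assume "h \<in> lc G g (gfib I a)"
  then obtain k where k: "k \<in> gfib I a" "h = g \<otimes>\<^bsub>G\<^esub> k" unfolding lc_def by blast
  have kc: "k \<in> carrier G" using k H_sub[OF a] by blast
  have "lc G h (gfib I a) = lc G g (lc G k (gfib I a))"
    using k kc g H_sub[OF a] by (simp add: lc_mult)
  also have "\<dots> = lc G g (gfib I a)" using lc_H_eq[OF a kc] k by simp
  finally show "lc G h (gfib I a) = lc G g (gfib I a)" .
next
  assume e: "lc G h (gfib I a) = lc G g (gfib I a)"
  have "h \<in> lc G h (gfib I a)" unfolding lc_def using h subgroup.one_closed[OF subH[OF a]]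
    by (auto intro!: image_eqI[of _ _ "\<one>\<^bsub>G\<^esub>"])
  then show "h \<in> lc G g (gfib I a)" using e by simp
qed

abbreviation "Z \<equiv> prod_topology T A"
abbreviation "q \<equiv> qmap G I"
abbreviation "Y \<equiv> qtop Z q"

lemma topZ: "topspace Z = carrier G \<times> topspace A" by (simp add: carrier_eq)

lemma q_eq:
  assumes "g \<in> carrier G" "h \<in> carrier G" "a \<in> topspace A" "b \<in> topspace A"
  shows "q (g, a) = q (h, b) \<longleftrightarrow> a = b \<and> h \<in> lc G g (gfib I a)"
  using assms mem_lc by (auto simp: qmap_def)

lemma I_closed: "closedin Z I"
  unfolding closedin_def
proof
  show "I \<subseteq> topspace Z" using Isub topZ by simp
  show "openin Z (topspace Z - I)"
    unfolding openin_subopen[of Z "topspace Z - I"]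
  proof
    fix z assume z: "z \<in> topspace Z - I"
    then obtain g a where ga: "z = (g, a)" "g \<in> carrier G" "a \<in> topspace A" "g \<notin> gfib I a"
      using topZ by (auto simp: gfib_def)
    obtain U where U: "openin A U" "a \<in> U" "\<forall>u\<in>U. gfib I u \<subseteq> gfib I a"
      using wlm ga(3) by (auto simp: weakly_locally_maximal_def)
    have o1: "openin T (carrier G - gfib I a)" using closedH[OF ga(3)] carrier_eq
      by (metis closedin_def)
    have "openin Z ((carrier G - gfib I a) \<times> U)"
      using o1 U(1) by (simp add: openin_prod_Times_iff)
    moreover have "(carrier G - gfib I a) \<times> U \<subseteq> topspace Z - I"
      using U openin_subset[OF U(1)] topZ by (auto simp: gfib_def)
    ultimately show "\<exists>T'. openin Z T' \<and> z \<in> T' \<and> T' \<subseteq> topspace Z - I"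
      using ga U by blast
  qed
qed

end



context constr begin

lemma q_top: "z \<in> topspace Z \<Longrightarrow> q z \<in> topspace Y"
  by (simp add: topspace_qtop)

lemma q_quot: "quotient_map Z Y q" by (rule quotient_map_qtop)

lemma q_cont: "continuous_map Z Y q" by (rule quotient_imp_continuous_map[OF q_quot])

lemma closed_map_q: "closed_map Z Y q"
  unfolding closed_map_def
proof (intro allI impI)
  fix C assume C: "closedin Z C"
  have CZ: "C \<subseteq> topspace Z" using closedin_subset[OF C] .
  define f1 where "f1 = (\<lambda>w::'g \<times> 'g \<times> 'a. (fst w, snd (snd w)))"
  define f2 where "f2 = (\<lambda>w::'g \<times> 'g \<times> 'a. (fst (snd w) \<otimes>\<^bsub>G\<^esub> inv\<^bsub>G\<^esub> (fst w), snd (snd w)))"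
  have c1: "continuous_map (prod_topology T Z) Z f1" unfolding f1_def
    by (intro continuous_map_pairedI continuous_map_fst continuous_map_compose[OF continuous_map_snd continuous_map_snd, unfolded o_def])
  have c2: "continuous_map (prod_topology T Z) Z f2" unfolding f2_def
    by (intro continuous_map_pairedI mult_cont inv_cont continuous_map_fst
        continuous_map_compose[OF continuous_map_snd continuous_map_snd, unfolded o_def]
        continuous_map_compose[OF continuous_map_snd continuous_map_fst, unfolded o_def])
  define W where "W = {w \<in> topspace (prod_topology T Z). f1 w \<in> I} \<inter> {w \<in> topspace (prod_topology T Z). f2 w \<in> C}"
  have "closedin (prod_topology T Z) W" unfolding W_def
    by (intro closedin_Int closedin_continuous_map_preimage[OF c1 I_closed] closedin_continuous_map_preimage[OF c2 C])
  then have clW: "closedin Z (snd ` W)" using closed_map_snd[OF cT] unfolding closed_map_def by blast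
  have eq: "snd ` W = {z \<in> topspace Z. q z \<in> q ` C}"
  proof
    show "snd ` W \<subseteq> {z \<in> topspace Z. q z \<in> q ` C}"
    proof
      fix z assume "z \<in> snd ` W"
      then obtain k h a where w: "(k, (h, a)) \<in> W" "z = (h, a)" by auto
      then have k: "k \<in> carrier G" and h: "h \<in> carrier G" and a: "a \<in> topspace A"
        and kI: "(k, a) \<in> I" and c: "(h \<otimes>\<^bsub>G\<^esub> inv\<^bsub>G\<^esub> k, a) \<in> C"
        by (auto simp: W_def f1_def f2_def carrier_eq)
      have kH: "k \<in> gfib I a" using kI by (simp add: gfib_def)
      have g: "h \<otimes>\<^bsub>G\<^esub> inv\<^bsub>G\<^esub> k \<in> carrier G" using h k by simp
      have "h = (h \<otimes>\<^bsub>G\<^esub> inv\<^bsub>G\<^esub> k) \<otimes>\<^bsub>G\<^esub> k" using h k by (simp add: m_assoc)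
      then have "h \<in> lc G (h \<otimes>\<^bsub>G\<^esub> inv\<^bsub>G\<^esub> k) (gfib I a)" unfolding lc_def using kH by blast
      then have "q (h \<otimes>\<^bsub>G\<^esub> inv\<^bsub>G\<^esub> k, a) = q (h, a)" using q_eq[OF g h a a] by simp
      then have "q z \<in> q ` C" using c w(2) by (metis image_eqI)
      then show "z \<in> {z \<in> topspace Z. q z \<in> q ` C}" using w(2) h a topZ by simp
    qed
    show "{z \<in> topspace Z. q z \<in> q ` C} \<subseteq> snd ` W"
    proof
      fix z assume "z \<in> {z \<in> topspace Z. q z \<in> q ` C}"
      then obtain h a c where z: "z = (h, a)" "h \<in> carrier G" "a \<in> topspace A" "c \<in> C" "q (h, a) = q c"
        using topZ by auto
      obtain g b where c: "c = (g, b)" "g \<in> carrier G" "b \<in> topspace A" using z(4) CZ topZ by auto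
      have "q (g, b) = q (h, a)" using z c by simp
      then have ba: "b = a" and "h \<in> lc G g (gfib I b)" using q_eq[OF c(2) z(2) c(3) z(3)] by auto
      then obtain k where k: "k \<in> gfib I a" "h = g \<otimes>\<^bsub>G\<^esub> k" unfolding lc_def by blast
      have kc: "k \<in> carrier G" using k H_sub[OF z(3)] by blast
      have "h \<otimes>\<^bsub>G\<^esub> inv\<^bsub>G\<^esub> k = g" using k kc c(2) by (simp add: m_assoc)
      then have "(k, (h, a)) \<in> W"
        using k kc z c ba by (auto simp: W_def f1_def f2_def carrier_eq gfib_def)
      then show "z \<in> snd ` W" using z by force
    qed
  qed
  have "q ` C \<subseteq> topspace Y" using CZ q_top by blast
  then show "closedin Y (q ` C)"
    using clW eq q_quot unfolding quotient_map_closedin by auto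
qed

lemma fibre_q:
  assumes g: "g \<in> carrier G" and a: "a \<in> topspace A"
  shows "{z \<in> topspace Z. q z = q (g, a)} = lc G g (gfib I a) \<times> {a}"
proof -
  have sub: "lc G g (gfib I a) \<subseteq> carrier G" using lc_sub[OF g H_sub[OF a]] .
  show ?thesis
  proof (rule Set.set_eqI)
    fix z :: "'g \<times> 'a"
    obtain h b where z: "z = (h, b)" by fastforce
    show "z \<in> {z \<in> topspace Z. q z = q (g, a)} \<longleftrightarrow> z \<in> lc G g (gfib I a) \<times> {a}"
    proof (cases "h \<in> carrier G \<and> b \<in> topspace A")
      case True
      then have "q (h, b) = q (g, a) \<longleftrightarrow> a = b \<and> h \<in> lc G g (gfib I a)"
        using q_eq[OF g _ a, of h b] by (metis)
      then show ?thesis using z True topZ by auto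
    next
      case False
      then show ?thesis using sub z topZ a by auto
    qed
  qed
qed

lemma fibre_compact:
  assumes g: "g \<in> carrier G" and a: "a \<in> topspace A"
  shows "compactin Z {z \<in> topspace Z. q z = q (g, a)}"
proof -
  have "continuous_map T T (\<lambda>k. g \<otimes>\<^bsub>G\<^esub> k)"
    using g carrier_eq by (intro mult_cont continuous_map_const[THEN iffD2] continuous_map_id[unfolded id_def]) auto
  moreover have "compactin T (gfib I a)" using closedin_compact_space[OF cT closedH[OF a]] .
  ultimately have "compactin T (lc G g (gfib I a))" unfolding lc_def by (rule image_compactin[rotated])
  then show ?thesis unfolding fibre_q[OF g a] using a by (simp add: compactin_Times)
qed

lemma HZ: "Hausdorff_space Z"
  using hT lA by (simp add: Hausdorff_space_prod_topology loc_compact_def)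

lemma HY: "Hausdorff_space Y"
proof (rule Hausdorff_proper_image[OF q_quot closed_map_q HZ])
  fix y assume "y \<in> topspace Y"
  then obtain g a where "g \<in> carrier G" "a \<in> topspace A" "y = q (g, a)"
    using topZ by (auto simp: topspace_qtop)
  then show "compactin Z {z \<in> topspace Z. q z = y}" using fibre_compact by simp
qed

lemma snd_q: "snd (q z) = snd z" by (simp add: qmap_def)

lemma snd_cont: "continuous_map Y A snd"
proof (rule continuous_compose_quotient_map[OF q_quot])
  show "continuous_map Z A (snd \<circ> q)"
    by (rule continuous_map_eq[OF continuous_map_snd]) (simp add: snd_q)
qed

lemma LY: "locally_compact_space Y"
  unfolding locally_compact_space_def
proof
  fix y assume y: "y \<in> topspace Y"
  then obtain g a where ga: "g \<in> carrier G" "a \<in> topspace A" "y = q (g, a)"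
    using topZ by (auto simp: topspace_qtop)
  obtain U K where UK: "openin A U" "compactin A K" "a \<in> U" "U \<subseteq> K"
    using lA ga(2) by (auto simp: loc_compact_def locally_compact_space_def)
  have "openin Y {y \<in> topspace Y. snd y \<in> U}"
    using openin_continuous_map_preimage[OF snd_cont UK(1)] .
  moreover have "compactin Y (q ` (carrier G \<times> K))"
  proof (rule image_compactin[OF _ q_cont])
    show "compactin Z (carrier G \<times> K)" using cT UK(2) carrier_eq
      by (simp add: compactin_Times compact_space_def)
  qed
  moreover have "{y \<in> topspace Y. snd y \<in> U} \<subseteq> q ` (carrier G \<times> K)"
  proof
    fix y' assume y': "y' \<in> {y \<in> topspace Y. snd y \<in> U}"
    then obtain z where z: "z \<in> topspace Z" "y' = q z" by (auto simp: topspace_qtop)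
    then have "snd z \<in> K" using y' UK(4) snd_q by auto
    then show "y' \<in> q ` (carrier G \<times> K)" using z topZ by (auto intro!: image_eqI[of _ _ z])
  qed
  moreover have "y \<in> {y \<in> topspace Y. snd y \<in> U}" using y ga UK(3) snd_q by simp
  ultimately show "\<exists>U K. openin Y U \<and> compactin Y K \<and> y \<in> U \<and> U \<subseteq> K" by blast
qed

lemma loc_compact_Y: "loc_compact Y" using HY LY by (simp add: loc_compact_def)

end



context constr begin

lemma topY_E:
  assumes "y \<in> topspace Y"
  obtains h a where "h \<in> carrier G" "a \<in> topspace A" "y = q (h, a)"
  using assms topZ by (auto simp: topspace_qtop)

lemma actY_q:
  assumes "g \<in> carrier G" "h \<in> carrier G" "a \<in> topspace A"
  shows "actY G g (q (h, a)) = q (g \<otimes>\<^bsub>G\<^esub> h, a)"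
  using assms H_sub by (simp add: actY_def qmap_def lc_mult)

lemma actY_cont: "continuous_map (prod_topology T Y) Y (\<lambda>(g, y). actY G g y)"
proof -
  have Q: "quotient_map (prod_topology T Z) (prod_topology T Y) (\<lambda>(x, y). (x, q y))"
    using quotient_map_prod_right[OF compact_imp_locally_compact_space[OF cT] _ q_quot] hT by blast
  have C: "continuous_map (prod_topology T Z) Y (\<lambda>w. q (fst w \<otimes>\<^bsub>G\<^esub> fst (snd w), snd (snd w)))"
    using continuous_map_compose[OF continuous_map_pairedI[OF
          mult_cont[OF continuous_map_fst continuous_map_compose[OF continuous_map_snd continuous_map_fst, unfolded o_def]]
          continuous_map_compose[OF continuous_map_snd continuous_map_snd, unfolded o_def]] q_cont]
    by (simp add: o_def)
  show ?thesis
  proof (rule continuous_compose_quotient_map[OF Q])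
    show "continuous_map (prod_topology T Z) Y ((\<lambda>(g, y). actY G g y) \<circ> (\<lambda>(x, y). (x, q y)))"
    proof (rule continuous_map_eq[OF C])
      fix w assume "w \<in> topspace (prod_topology T Z)"
      then obtain x h a where w: "w = (x, (h, a))" "x \<in> carrier G" "h \<in> carrier G" "a \<in> topspace A"
        using carrier_eq by auto
      then show "q (fst w \<otimes>\<^bsub>G\<^esub> fst (snd w), snd (snd w)) = ((\<lambda>(g, y). actY G g y) \<circ> (\<lambda>(x, y). (x, q y))) w"
        by (simp add: actY_q)
    qed
  qed
qed

lemma cont_action_Y: "cont_action G T Y (actY G)"
  unfolding cont_action_def
proof (intro conjI ballI actY_cont)
  fix g y assume g: "g \<in> carrier G" and y: "y \<in> topspace Y"
  from y obtain h a where y': "h \<in> carrier G" "a \<in> topspace A" "y = q (h, a)" by (rule topY_E)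
  show "actY G g y \<in> topspace Y" using g y' topZ by (simp add: actY_q q_top)
next
  fix y assume y: "y \<in> topspace Y"
  from y obtain h a where y': "h \<in> carrier G" "a \<in> topspace A" "y = q (h, a)" by (rule topY_E)
  show "actY G \<one>\<^bsub>G\<^esub> y = y" using y' by (simp add: actY_q)
next
  fix g h y assume g: "g \<in> carrier G" and h: "h \<in> carrier G" and y: "y \<in> topspace Y"
  from y obtain k a where y': "k \<in> carrier G" "a \<in> topspace A" "y = q (k, a)" by (rule topY_E)
  show "actY G (g \<otimes>\<^bsub>G\<^esub> h) y = actY G g (actY G h y)"
    using g h y' by (simp add: actY_q m_assoc)
qed

definition phiY :: "'a \<Rightarrow> 'g set \<times> 'a" where "phiY a = (gfib I a, a)"

lemma phiY_q: "a \<in> topspace A \<Longrightarrow> phiY a = q (\<one>\<^bsub>G\<^esub>, a)"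
  using H_sub by (simp add: phiY_def qmap_def lc_one)

lemma actY_phiY: "g \<in> carrier G \<Longrightarrow> a \<in> topspace A \<Longrightarrow> actY G g (phiY a) = q (g, a)"
  by (simp add: phiY_def qmap_def actY_def)

lemma split_Y: "split_space G T Y (actY G) A snd phiY"
  unfolding split_space_def
proof (intro conjI ballI cont_action_Y snd_cont)
  show "snd ` topspace Y = topspace A"
  proof
    show "snd ` topspace Y \<subseteq> topspace A" using continuous_map_image_subset_topspace[OF snd_cont] .
    show "topspace A \<subseteq> snd ` topspace Y"
    proof
      fix a assume a: "a \<in> topspace A"
      then have "q (\<one>\<^bsub>G\<^esub>, a) \<in> topspace Y" using topZ by (simp add: q_top)
      then show "a \<in> snd ` topspace Y" by (force simp: snd_q)
    qed
  qed
next
  fix a assume a: "a \<in> topspace A"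
  have "phiY a \<in> topspace Y" using a topZ by (simp add: phiY_q q_top)
  moreover have "{y \<in> topspace Y. snd y = a} = orbit G (actY G) (phiY a)"
  proof
    show "{y \<in> topspace Y. snd y = a} \<subseteq> orbit G (actY G) (phiY a)"
    proof
      fix y assume "y \<in> {y \<in> topspace Y. snd y = a}"
      then obtain h b where y: "h \<in> carrier G" "b \<in> topspace A" "y = q (h, b)" "snd y = a"
        by (auto elim: topY_E)
      then have "b = a" by (simp add: snd_q)
      then have "y = actY G h (phiY a)" using y a by (simp add: actY_phiY)
      then show "y \<in> orbit G (actY G) (phiY a)" using y by (auto simp: orbit_def)
    qed
    show "orbit G (actY G) (phiY a) \<subseteq> {y \<in> topspace Y. snd y = a}"
      using a topZ by (auto simp: orbit_def actY_phiY q_top snd_q)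
  qed
  ultimately show "\<exists>x\<in>topspace Y. {y \<in> topspace Y. snd y = a} = orbit G (actY G) x" by blast
next
  show "continuous_map A Y phiY"
  proof (rule continuous_map_eq)
    have c1: "continuous_map A T (\<lambda>a. \<one>\<^bsub>G\<^esub>)" using carrier_eq by (simp add: continuous_map_const)
    have "continuous_map A Y (q \<circ> (\<lambda>a. (\<one>\<^bsub>G\<^esub>, a)))"
      by (rule continuous_map_compose[OF continuous_map_pairedI[OF c1 continuous_map_id[unfolded id_def]] q_cont])
    then show "continuous_map A Y (\<lambda>a. q (\<one>\<^bsub>G\<^esub>, a))" by (simp add: o_def)
    show "\<And>a. a \<in> topspace A \<Longrightarrow> q (\<one>\<^bsub>G\<^esub>, a) = phiY a" by (simp add: phiY_q)
  qed
next
  fix a show "snd (phiY a) = a" by (simp add: phiY_def)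
qed

lemma iso_Y: "isotropy_groupoid G (actY G) A phiY = I"
proof -
  have "stabiliser G (actY G) (phiY a) = gfib I a" if a: "a \<in> topspace A" for a
    using lc_H_eq[OF a] H_sub[OF a] by (auto simp: stabiliser_def phiY_def actY_def)
  then show ?thesis using Isub by (auto simp: isotropy_groupoid_def gfib_def)
qed

lemma part_i: "\<exists>(Y' :: ('g set \<times> 'a) topology) act \<pi>Y \<phi>Y.
            split_space G T Y' act A \<pi>Y \<phi>Y \<and> isotropy_groupoid G act A \<phi>Y = I \<and> loc_compact Y'"
  using split_Y iso_Y loc_compact_Y by blast

end



lemma stab_iso:
  assumes "isotropy_groupoid G act A \<phi> = I" "a \<in> topspace A"
  shows "stabiliser G act (\<phi> a) = gfib I a"
  using assms by (auto simp: isotropy_groupoid_def gfib_def)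

lemma part_ii:
  assumes tg: "topological_group G T" and cT: "compact_space T"
    and s1: "split_space G T X act A \<pi> \<phi>" and i1: "isotropy_groupoid G act A \<phi> = I" and l1: "loc_compact X"
    and s2: "split_space G T X' act' A \<pi>' \<phi>'" and i2: "isotropy_groupoid G act' A \<phi>' = I" and l2: "loc_compact X'"
  shows "\<exists>F. equivariant_homeo G X act X' act' F \<and> (\<forall>a\<in>topspace A. \<phi>' a = F (\<phi> a)) \<and>
                  (\<forall>F'. equivariant_homeo G X act X' act' F' \<and> (\<forall>a\<in>topspace A. \<phi>' a = F' (\<phi> a))
                        \<longrightarrow> (\<forall>x\<in>topspace X. F' x = F x))"
proof -
  interpret S1: splitsp G T X act A \<pi> \<phi> using tg s1 by unfold_locales
  interpret S2: splitsp G T X' act' A \<pi>' \<phi>' using tg s2 by unfold_locales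
  let ?p = "\<lambda>(g, a). act g (\<phi> a)"
  let ?p' = "\<lambda>(g, a). act' g (\<phi>' a)"
  have eq: "?p z = ?p w \<longleftrightarrow> ?p' z = ?p' w"
    if z: "z \<in> topspace (prod_topology T A)" and w: "w \<in> topspace (prod_topology T A)" for z w
  proof -
    obtain g a h b where zw: "z = (g, a)" "w = (h, b)" "g \<in> carrier G" "h \<in> carrier G"
      "a \<in> topspace A" "b \<in> topspace A" using z w S1.carrier_eq by auto
    show ?thesis using S1.p_eq[OF zw(3-6)] S2.p_eq[OF zw(3-6)] stab_iso[OF i1 zw(5)] stab_iso[OF i2 zw(5)] zw(1,2)
      by simp
  qed
  obtain F where F: "homeomorphic_map X X' F" "\<forall>z \<in> topspace (prod_topology T A). F (?p z) = ?p' z"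
    using quotient_iso[OF S1.p_quot[OF cT l1] S2.p_quot[OF cT l2] eq] by blast
  have Fp: "F (act g (\<phi> a)) = act' g (\<phi>' a)" if "g \<in> carrier G" "a \<in> topspace A" for g a
    using F(2) that S1.carrier_eq by force
  have decomp: "\<exists>h\<in>carrier G. \<exists>a\<in>topspace A. x = act h (\<phi> a)" if "x \<in> topspace X" for x
    using S1.surj[OF that] S1.pi_top[OF that] by blast
  have equi: "equivariant_homeo G X act X' act' F"
    unfolding equivariant_homeo_def
  proof (intro conjI ballI F(1))
    fix g x assume g: "g \<in> carrier G" and x: "x \<in> topspace X"
    then obtain h a where ha: "h \<in> carrier G" "a \<in> topspace A" "x = act h (\<phi> a)" using decomp by blast
    have "F (act g x) = F (act (g \<otimes>\<^bsub>G\<^esub> h) (\<phi> a))" using g ha by (simp add: S1.act_mult S1.phi_top)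
    also have "\<dots> = act' (g \<otimes>\<^bsub>G\<^esub> h) (\<phi>' a)" using g ha by (simp add: Fp)
    also have "\<dots> = act' g (act' h (\<phi>' a))" using g ha by (simp add: S2.act_mult S2.phi_top)
    also have "\<dots> = act' g (F x)" using ha by (simp add: Fp)
    finally show "F (act g x) = act' g (F x)" .
  qed
  have phis: "\<phi>' a = F (\<phi> a)" if a: "a \<in> topspace A" for a
    using Fp[OF S1.one_closed a] S1.act_one[OF S1.phi_top[OF a]] S2.act_one[OF S2.phi_top[OF a]] by simp
  have uniq: "\<forall>x\<in>topspace X. F' x = F x"
    if F': "equivariant_homeo G X act X' act' F'" "\<forall>a\<in>topspace A. \<phi>' a = F' (\<phi> a)" for F'
  proof
    fix x assume x: "x \<in> topspace X"
    then obtain h a where ha: "h \<in> carrier G" "a \<in> topspace A" "x = act h (\<phi> a)" using decomp by blast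
    have "F' x = act' h (F' (\<phi> a))" using F'(1) ha S1.phi_top by (simp add: equivariant_homeo_def)
    also have "\<dots> = act' h (\<phi>' a)" using F'(2) ha by simp
    also have "\<dots> = F x" using ha by (simp add: Fp)
    finally show "F' x = F x" .
  qed
  show ?thesis using equi phis uniq by blast
qed

theorem proposition2p1:
  fixes G :: "('g, 'b) monoid_scheme" and T :: "'g topology" and A :: "'a topology"
    and I :: "('g \<times> 'a) set"
  assumes "topological_group G T" and "compact_space T" and "Hausdorff_space T"
    and "loc_compact A"
    and "GA_groupoid G T A I" and "weakly_locally_maximal A I"
  shows "(\<exists>(Y :: ('g set \<times> 'a) topology) act \<pi>Y \<phi>Y.
            split_space G T Y act A \<pi>Y \<phi>Y \<and> isotropy_groupoid G act A \<phi>Y = I \<and> loc_compact Y)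
       \<and> (\<forall>(X :: 'x topology) act \<pi> \<phi> (X' :: 'y topology) act' \<pi>' \<phi>'.
           split_space G T X act A \<pi> \<phi> \<and> isotropy_groupoid G act A \<phi> = I \<and> loc_compact X \<and>
           split_space G T X' act' A \<pi>' \<phi>' \<and> isotropy_groupoid G act' A \<phi>' = I \<and> loc_compact X'
           \<longrightarrow> (\<exists>F. equivariant_homeo G X act X' act' F \<and> (\<forall>a\<in>topspace A. \<phi>' a = F (\<phi> a)) \<and>
                  (\<forall>F'. equivariant_homeo G X act X' act' F' \<and> (\<forall>a\<in>topspace A. \<phi>' a = F' (\<phi> a))
                        \<longrightarrow> (\<forall>x\<in>topspace X. F' x = F x))))"
proof
  interpret C: constr G T A I using assms by unfold_locales
  show "\<exists>(Y :: ('g set \<times> 'a) topology) act \<pi>Y \<phi>Y.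
            split_space G T Y act A \<pi>Y \<phi>Y \<and> isotropy_groupoid G act A \<phi>Y = I \<and> loc_compact Y"
    by (rule C.part_i)
next
  show "\<forall>(X :: 'x topology) act \<pi> \<phi> (X' :: 'y topology) act' \<pi>' \<phi>'.
           split_space G T X act A \<pi> \<phi> \<and> isotropy_groupoid G act A \<phi> = I \<and> loc_compact X \<and>
           split_space G T X' act' A \<pi>' \<phi>' \<and> isotropy_groupoid G act' A \<phi>' = I \<and> loc_compact X'
           \<longrightarrow> (\<exists>F. equivariant_homeo G X act X' act' F \<and> (\<forall>a\<in>topspace A. \<phi>' a = F (\<phi> a)) \<and>
                  (\<forall>F'. equivariant_homeo G X act X' act' F' \<and> (\<forall>a\<in>topspace A. \<phi>' a = F' (\<phi> a))
                        \<longrightarrow> (\<forall>x\<in>topspace X. F' x = F x)))"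
    using part_ii[OF assms(1,2)] by blast
qed


end
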